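(* Let $\mathcal{S}\subseteq\mathcal{X}\times\mathcal{Y}$ and $f:\mathcal{X}\times\mathcal{Y}\to\mathcal{V}$. For every $(Q_0,\dots,Q_{|\mathcal{Y}|-1})\in\mathcal{Q}_n^{|\mathcal{Y}|}$, the compatible hyperedge $e(Q_0,\dots,Q_{|\mathcal{Y}|-1})$ is solvable for $(\mathcal{S},f)$; furthermore there exists $\tilde e\in\mathcal{E}(\mathcal{S},f)$ with $e(Q_0,\dots,Q_{|\mathcal{Y}|-1})\subseteq\tilde e$.
   Context: Finite alphabets, $\mathcal{Y}=\{0,\dots,|\mathcal{Y}|-1\}$. $\mathcal{Q}_n=\mathcal{P}_n(\mathcal{V})$, the set of types of sequences in $\mathcal{V}^n$. A symbol $a\in\mathcal{X}$ is compatible with $(Q_0,\dots,Q_{|\mathcal{Y}|-1})$ if for all $b_1,b_2$ with $(a,b_1),(a,b_2)\in\mathcal{S}$: $nQ_{b_1}(v)-nQ_{b_2}(v)=\mathbf{1}[f(a,b_1)=v]-\mathbf{1}[f(a,b_2)=v]$ for all $v$; $e(Q_0,\dots,Q_{|\mathcal{Y}|-1})$ is the set of compatible symbols. For $\mathcal{A}\times\mathcal{B}\subseteq\mathcal{X}\times\mathcal{Y}$, a simple loop is a set $\{(a_0,b_0),(a_0,b_1),(a_1,b_1),\dots,(a_{k-1},b_{k-1}),(a_{k-1},b_0)\}\subseteq(\mathcal{A}\times\mathcal{B})\cap\mathcal{S}$ with the $a_i$ pairwise distinct and the $b_i$ pairwise distinct; with $\mathcal{I}_+(v)=\{i:f(a_i,b_i)=v\}$,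 $\mathcal{I}_-(v)=\{i:f(a_i,b_{i+1\bmod k})=v\}$, $\mathcal{A}\times\mathcal{B}$ is solvable for $(\mathcal{S},f)$ if every simple loop in it has $|\mathcal{I}_+(v)|=|\mathcal{I}_-(v)|$ for all $v$. $e\subseteq\mathcal{X}$ is solvable if $e\times\mathcal{Y}$ is solvable; $\mathcal{E}(\mathcal{S},f)$ is the set of inclusion-maximal solvable subsets of $\mathcal{X}$. *)

theory Defs
  imports Main "HOL-Library.Indicator_Function"
begin

definition types_n :: "nat \<Rightarrow> ('v::finite \<Rightarrow> real) set" where
  "types_n n = {Q. (\<forall>v. \<exists>k::nat. Q v = real k / real n) \<and> (\<Sum>v\<in>UNIV. Q v) = 1}"

text \<open>Compatible symbols e(Q_0,...,Q_{|Y|-1}); the tuple is indexed by the finite type 'y.\<close>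
definition compatible_edge ::
  "nat \<Rightarrow> ('x \<times> 'y) set \<Rightarrow> ('x \<Rightarrow> 'y \<Rightarrow> 'v) \<Rightarrow> ('y \<Rightarrow> 'v \<Rightarrow> real) \<Rightarrow> 'x set" where
  "compatible_edge n S f Q = {a. \<forall>b1 b2. (a, b1) \<in> S \<longrightarrow> (a, b2) \<in> S \<longrightarrow>
      (\<forall>v. real n * Q b1 v - real n * Q b2 v =
           indicator {v. f a b1 = v} v - indicator {v. f a b2 = v} v)}"

definition simple_loop ::
  "('x \<times> 'y) set \<Rightarrow> 'x set \<Rightarrow> 'y set \<Rightarrow> nat \<Rightarrow> (nat \<Rightarrow> 'x) \<Rightarrow> (nat \<Rightarrow> 'y) \<Rightarrow> bool" where
  "simple_loop S A B k a b \<longleftrightarrow> 2 \<le> k \<and> inj_on a {0..<k} \<and> inj_on b {0..<k} \<and>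
     (\<forall>i<k. (a i, b i) \<in> (A \<times> B) \<inter> S \<and> (a i, b ((i + 1) mod k)) \<in> (A \<times> B) \<inter> S)"

definition solvable_rect ::
  "('x \<times> 'y) set \<Rightarrow> ('x \<Rightarrow> 'y \<Rightarrow> 'v) \<Rightarrow> 'x set \<Rightarrow> 'y set \<Rightarrow> bool" where
  "solvable_rect S f A B \<longleftrightarrow> (\<forall>k a b. simple_loop S A B k a b \<longrightarrow>
     (\<forall>v. card {i. i < k \<and> f (a i) (b i) = v} = card {i. i < k \<and> f (a i) (b ((i + 1) mod k)) = v}))"

definition solvable_set :: "('x \<times> 'y) set \<Rightarrow> ('x \<Rightarrow> 'y \<Rightarrow> 'v) \<Rightarrow> 'x set \<Rightarrow> bool" where
  "solvable_set S f e \<longleftrightarrow> solvable_rect S f e UNIV"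

definition max_solvable :: "('x \<times> 'y) set \<Rightarrow> ('x \<Rightarrow> 'y \<Rightarrow> 'v) \<Rightarrow> 'x set set" where
  "max_solvable S f = {e. solvable_set S f e \<and> (\<forall>e'. solvable_set S f e' \<and> e \<subseteq> e' \<longrightarrow> e' = e)}"

end

theory Submission
  imports Defs
begin

lemma shift_sum:
  fixes h :: "nat \<Rightarrow> real"
  assumes "0 < k"
  shows "(\<Sum>i<k. h ((i + 1) mod k)) = (\<Sum>i<k. h i)"
proof -
  obtain m where k: "k = Suc m" using assms by (cases k) auto
  have "(\<Sum>i<Suc m. h ((i + 1) mod Suc m)) = (\<Sum>i<m. h ((i + 1) mod Suc m)) + h 0"
    by simp
  also have "(\<Sum>i<m. h ((i + 1) mod Suc m)) = (\<Sum>i<m. h (Suc i))"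
    by (rule sum.cong) auto
  also have "\<dots> + h 0 = (\<Sum>i<Suc m. h i)"
    by (simp only: sum.lessThan_Suc_shift)
  finally show ?thesis using k by simp
qed

lemma card_sum:
  fixes k :: nat
  shows
  "real (card {i. i < k \<and> P i}) = (\<Sum>i<k. if P i then 1 else (0::real))"
proof (induction k)
  case 0 then show ?case by simp
next
  case (Suc k)
  show ?case
  proof (cases "P k")
    case True
    have "{i. i < Suc k \<and> P i} = insert k {i. i < k \<and> P i}" using True by auto
    then show ?thesis using Suc True by simp
  next
    case False
    have "{i. i < Suc k \<and> P i} = {i. i < k \<and> P i}" using False less_Suc_eq by auto
    then show ?thesis using Suc False by simp
  qed
qed

lemma compat_solvable:
  "solvable_set S f (compatible_edge n S f Q)"
  unfolding solvable_set_def solvable_rect_def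
proof (intro allI impI)
  fix k a b v
  assume L: "simple_loop S (compatible_edge n S f Q) UNIV k a b"
  let ?g = "\<lambda>i. real n * Q (b i) v"
  have k: "0 < k" using L by (simp add: simple_loop_def)
  have pt: "(if f (a i) (b i) = v then 1 else 0) - (if f (a i) (b ((i+1) mod k)) = v then 1 else 0)
      = ?g i - ?g ((i+1) mod k)" if "i < k" for i
  proof -
    have c: "a i \<in> compatible_edge n S f Q" and s1: "(a i, b i) \<in> S"
      and s2: "(a i, b ((i+1) mod k)) \<in> S"
      using L that by (auto simp: simple_loop_def)
    show ?thesis using c s1 s2 unfolding compatible_edge_def
      by (auto simp: indicator_def)
  qed
  have "(\<Sum>i<k. (if f (a i) (b i) = v then 1 else 0) - (if f (a i) (b ((i+1) mod k)) = v then 1 else (0::real)))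
      = (\<Sum>i<k. ?g i - ?g ((i+1) mod k))"
    by (rule sum.cong[OF refl], rule pt, simp)
  also have "\<dots> = 0"
    using shift_sum[OF k, of ?g] by (simp add: sum_subtractf)
  finally have "(\<Sum>i<k. if f (a i) (b i) = v then 1 else (0::real))
      = (\<Sum>i<k. if f (a i) (b ((i+1) mod k)) = v then 1 else (0::real))"
    by (simp add: sum_subtractf)
  then have "real (card {i. i < k \<and> f (a i) (b i) = v})
      = real (card {i. i < k \<and> f (a i) (b ((i + 1) mod k)) = v})"
    by (simp only: card_sum)
  then show "card {i. i < k \<and> f (a i) (b i) = v} = card {i. i < k \<and> f (a i) (b ((i + 1) mod k)) = v}"
    by simp
qed

lemma exists_max:
  fixes S :: "('x::finite \<times> 'y) set"
  assumes "solvable_set S f C"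
  shows "\<exists>e' \<in> max_solvable S f. C \<subseteq> e'"
proof -
  let ?F = "{e. solvable_set S f e \<and> C \<subseteq> e}"
  have fin: "finite ?F" by simp
  have ne: "C \<in> ?F" using assms by simp
  obtain m where m: "m \<in> ?F" and mx: "\<forall>e\<in>?F. card e \<le> card m"
  proof -
    have "finite (card ` ?F)" "card ` ?F \<noteq> {}" using fin ne by auto
    then have "Max (card ` ?F) \<in> card ` ?F" by (rule Max_in)
    then obtain m where "m \<in> ?F" "card m = Max (card ` ?F)" by auto
    moreover have "\<forall>e\<in>?F. card e \<le> Max (card ` ?F)" using fin by auto
    ultimately show ?thesis using that by auto
  qed
  have "m \<in> max_solvable S f"
    unfolding max_solvable_def
  proof (intro CollectI conjI allI impI)
    show "solvable_set S f m" using m by simp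
    fix e' assume h: "solvable_set S f e' \<and> m \<subseteq> e'"
    then have "e' \<in> ?F" using m by auto
    then have "card e' \<le> card m" using mx by blast
    then show "e' = m" using h card_seteq[of e' m] by simp
  qed
  then show ?thesis using m by blast
qed

theorem lemma3:
  fixes S :: "('x::finite \<times> 'y::finite) set"
    and f :: "'x \<Rightarrow> 'y \<Rightarrow> 'v::finite"
    and n :: nat
    and Q :: "'y \<Rightarrow> 'v \<Rightarrow> real"
  assumes "\<forall>b. Q b \<in> types_n n"
  shows "solvable_set S f (compatible_edge n S f Q) \<and>
         (\<exists>e' \<in> max_solvable S f. compatible_edge n S f Q \<subseteq> e')"
proof
  show "solvable_set S f (compatible_edge n S f Q)" by (rule compat_solvable)
  then show "\<exists>e' \<in> max_solvable S f. compatible_edge n S f Q \<subseteq> e'" by (rule exists_max)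
qed

end
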